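(* Let $p$ be an odd prime, $n=2k$, and $\mathcal{S}=\{y\in\mathbb{F}_{p^n}: T^n_k(y)=0\}$. Let $L(x)=\sum_{j=0}^{n-1}c_jx^{p^j}$ with all $c_j\in\mathbb{F}_{p^k}$ be a linearized polynomial that permutes $\mathbb{F}_{p^n}$, let $\delta\in\mathcal{S}$, and let $s\in\{2,4,\dots,p^n-1\}$ be even. Then the mapping $$G(x)=-L(x)+(x+\delta)^s-(x+\delta)^{p^ks}$$ permutes $\mathcal{S}$, and consequently $$F(x)=L(x)+(x^{p^k}-x+\delta)^s$$ is a permutation of $\mathbb{F}_{p^n}$.
   Context: $T^n_k(\beta)=\beta+\beta^{p^k}$ for $n=2k$ is the relative trace from $\mathbb{F}_{p^n}$ to $\mathbb{F}_{p^k}$. *)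

theory Defs
  imports "HOL-Computational_Algebra.Primes"
begin

text \<open>The finite field F_{p^n} is modelled as a finite field type 'a with CARD('a) = p^n.
  The subfield F_{p^k} is the set of fixed points of x \<mapsto> x^(p^k).\<close>

definition rel_trace :: "nat \<Rightarrow> nat \<Rightarrow> 'a::field \<Rightarrow> 'a" where
  "rel_trace p k y = y + y ^ (p ^ k)"

definition subfield_elems :: "nat \<Rightarrow> nat \<Rightarrow> 'a::field set" where
  "subfield_elems p k = {z. z ^ (p ^ k) = z}"

definition linearized :: "nat \<Rightarrow> nat \<Rightarrow> (nat \<Rightarrow> 'a::field) \<Rightarrow> 'a \<Rightarrow> 'a" where
  "linearized p n c x = (\<Sum>j<n. c j * x ^ (p ^ j))"

end

theory Submission
  imports Defs "HOL-Number_Theory.Residues"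
begin

lemma card_pow_same:
  fixes x :: "'a :: {field,finite}"
  shows "x ^ card (UNIV :: 'a set) = x"
proof (cases "x = 0")
  case False
  have "x * (\<Prod>y\<in>UNIV-{0}. x * y) = x * x ^ (card (UNIV :: 'a set) - 1) * \<Prod>(UNIV-{0})"
    by (simp add: prod.distrib mult_ac)
  also have "x * x ^ (card (UNIV :: 'a set) - 1) = x ^ Suc (card (UNIV :: 'a set) - 1)"
    by (subst power_Suc) auto
  also have "Suc (card (UNIV :: 'a set) - 1) = card (UNIV :: 'a set)"
    using finite_UNIV_card_ge_0[where ?'a = 'a] by simp
  also have "(\<Prod>y\<in>UNIV-{0}. x * y) = (\<Prod>y\<in>UNIV-{0}. y)"
    by (rule prod.reindex_bij_witness[of _ "\<lambda>y. y / x" "\<lambda>y. x * y"]) (use False in auto)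
  finally show ?thesis
    by simp
qed (use finite_UNIV_card_ge_0[where ?'a = 'a] in auto)

lemma char_is_p:
  assumes "prime p" "card (UNIV :: 'a :: {field,finite} set) = p ^ n"
  shows "CHAR('a) = p"
proof -
  have pos: "CHAR('a) > 0" by (rule finite_imp_CHAR_pos) simp
  have pr: "prime CHAR('a)" using prime_CHAR_semidom[OF pos] .
  have "CHAR('a) dvd p ^ n" using CHAR_dvd_CARD[where 'a='a] assms(2) by simp
  hence "CHAR('a) dvd p" using pr prime_dvd_power by blast
  thus ?thesis using pr assms(1) primes_dvd_imp_eq by blast
qed

lemma frob_add:
  assumes "CHAR('a) = p" "prime p"
  shows "((x::'a::{field,finite}) + y) ^ (p ^ j) = x ^ (p ^ j) + y ^ (p ^ j)"
  by (rule freshmans_dream') (use assms in auto)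

lemma frob_neg:
  assumes "CHAR('a) = p" "prime p"
  shows "(- (x::'a::{field,finite})) ^ (p ^ j) = - (x ^ (p ^ j))"
proof -
  have "(- x + x) ^ (p ^ j) = (-x) ^ (p ^ j) + x ^ (p ^ j)" by (rule frob_add[OF assms])
  moreover have "p ^ j > 0" using assms(2) prime_gt_0_nat by simp
  hence "(0::'a) ^ (p ^ j) = 0" by simp
  ultimately show ?thesis by (simp add: eq_neg_iff_add_eq_0)
qed

lemma frob_diff:
  assumes "CHAR('a) = p" "prime p"
  shows "((x::'a::{field,finite}) - y) ^ (p ^ j) = x ^ (p ^ j) - y ^ (p ^ j)"
  using frob_add[OF assms, of x "-y" j] frob_neg[OF assms, of y j] by simp

lemma lin_add:
  assumes "CHAR('a) = p" "prime p"
  shows "linearized p n c ((x::'a::{field,finite}) + y) = linearized p n c x + linearized p n c y"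
  unfolding linearized_def by (simp add: frob_add[OF assms] distrib_left sum.distrib)

lemma lin_diff:
  assumes "CHAR('a) = p" "prime p"
  shows "linearized p n c ((x::'a::{field,finite}) - y) = linearized p n c x - linearized p n c y"
  unfolding linearized_def by (simp add: frob_diff[OF assms] right_diff_distrib sum_subtractf)

lemma lin_frob:
  assumes "CHAR('a) = p" "prime p" "\<forall>j<n. c j \<in> subfield_elems p k"
  shows "(linearized p n c (x::'a::{field,finite})) ^ (p ^ k) = linearized p n c (x ^ (p ^ k))"
proof -
  have "(linearized p n c x) ^ (p ^ k) = (\<Sum>j<n. (c j * x ^ (p ^ j)) ^ (p ^ k))"
    unfolding linearized_def by (rule freshmans_dream_sum') (use assms in auto)
  also have "\<dots> = (\<Sum>j<n. c j * (x ^ (p ^ k)) ^ (p ^ j))"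
  proof (rule sum.cong)
    fix j assume "j \<in> {..<n}"
    hence "c j ^ (p ^ k) = c j" using assms(3) by (auto simp: subfield_elems_def)
    thus "(c j * x ^ (p ^ j)) ^ (p ^ k) = c j * (x ^ (p ^ k)) ^ (p ^ j)"
      by (simp add: power_mult_distrib flip: power_mult add: mult.commute)
  qed simp
  finally show ?thesis unfolding linearized_def .
qed

theorem proposition6:
  fixes p k n s :: nat and c :: "nat \<Rightarrow> 'a::{field,finite}" and \<delta> :: 'a
  assumes "prime p" and "odd p"
    and "n = 2 * k"
    and "card (UNIV :: 'a set) = p ^ n"
    and "\<forall>j<n. c j \<in> subfield_elems p k"
    and "bij (linearized p n c)"
    and "\<delta> \<in> {y. rel_trace p k y = 0}"
    and "even s" and "2 \<le> s" and "s \<le> p ^ n - 1"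
  shows "bij_betw (\<lambda>x. - linearized p n c x + (x + \<delta>) ^ s - (x + \<delta>) ^ (p ^ k * s))
            {y. rel_trace p k y = 0} {y. rel_trace p k y = 0}
       \<and> bij (\<lambda>x. linearized p n c x + (x ^ (p ^ k) - x + \<delta>) ^ s)"
proof -
  define q where "q = p ^ k"
  define L where "L = linearized p n c"
  define S where "S = {y::'a. rel_trace p k y = 0}"
  have ch: "CHAR('a) = p" using char_is_p assms(1,4) by blast
  note pr = assms(1)
  have qq: "\<And>x::'a. (x ^ q) ^ q = x"
  proof -
    fix x :: 'a
    have "(x ^ q) ^ q = x ^ (p ^ n)" unfolding q_def assms(3)
      by (simp flip: power_mult add: power_add mult_2 power_mult_distrib)
    thus "(x ^ q) ^ q = x" using card_pow_same[of x] assms(4) by simp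
  qed
  have Smem: "\<And>y. y \<in> S \<longleftrightarrow> y ^ q = - y"
    unfolding S_def rel_trace_def q_def by (auto simp: eq_neg_iff_add_eq_0 add.commute)
  have Lfr: "\<And>x. (L x) ^ q = L (x ^ q)" unfolding L_def q_def by (rule lin_frob[OF ch pr assms(5)])
  have Ladd: "\<And>x y. L (x + y) = L x + L y" unfolding L_def by (rule lin_add[OF ch pr])
  have Ldiff: "\<And>x y. L (x - y) = L x - L y" unfolding L_def by (rule lin_diff[OF ch pr])
  have Lneg: "\<And>x. L (- x) = - L x" using Ldiff[of 0] Ldiff[of 0 0] by simp
  have Linj: "\<And>x y. L x = L y \<Longrightarrow> x = y" using assms(6) unfolding L_def bij_def inj_def by blast
  have fadd: "\<And>x y::'a. (x + y) ^ q = x ^ q + y ^ q" unfolding q_def by (rule frob_add[OF ch pr])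
  have fdiff: "\<And>x y::'a. (x - y) ^ q = x ^ q - y ^ q" unfolding q_def by (rule frob_diff[OF ch pr])
  have evp: "\<And>y::'a. (- y) ^ s = y ^ s" using assms(8) by simp
  have dS: "\<delta> \<in> S" using assms(7) S_def by simp
  have Spow: "\<And>y. y \<in> S \<Longrightarrow> y ^ (q * s) = y ^ s"
    by (simp add: power_mult Smem evp)
  have G_on: "\<And>x. x \<in> S \<Longrightarrow> (x + \<delta>) ^ (q * s) = (x + \<delta>) ^ s"
  proof -
    fix x assume "x \<in> S"
    hence "x + \<delta> \<in> S" using dS by (simp add: Smem fadd)
    thus "(x + \<delta>) ^ (q * s) = (x + \<delta>) ^ s" using Spow by simp
  qed
  have p1: "bij_betw (\<lambda>x. - L x) S S"
  proof -
    have maps: "(\<lambda>x. - L x) ` S \<subseteq> S"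
    proof
      fix y assume "y \<in> (\<lambda>x. - L x) ` S"
      then obtain x where x: "x \<in> S" "y = - L x" by auto
      have "(- L x) ^ q = - L (x ^ q)" using Lfr
        by (metis Lneg Lfr ch pr q_def frob_neg)
      also have "\<dots> = L x" using x(1) Smem Lneg by simp
      finally show "y \<in> S" using x Smem by simp
    qed
    have inj: "inj_on (\<lambda>x. - L x) S" by (rule inj_onI) (use Linj in auto)
    show ?thesis using maps inj
      by (metis bij_betw_def card_image card_subset_eq finite)
  qed
  have part1: "bij_betw (\<lambda>x. - L x + (x + \<delta>) ^ s - (x + \<delta>) ^ (q * s)) S S"
    using p1 by (rule bij_betw_cong[THEN iffD1, rotated]) (simp add: G_on)
  define F where "F = (\<lambda>x. L x + (x ^ q - x + \<delta>) ^ s)"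
  have uS: "\<And>x. x ^ q - x + \<delta> \<in> S"
    using dS by (simp add: Smem fadd fdiff qq)
  have psiF: "\<And>x. (F x) ^ q - F x = L (x ^ q - x)"
  proof -
    fix x
    have "(F x) ^ q = L (x ^ q) + (x ^ q - x + \<delta>) ^ s"
      unfolding F_def fadd Lfr by (simp flip: power_mult add: mult.commute Spow[OF uS])
    thus "(F x) ^ q - F x = L (x ^ q - x)" by (simp add: F_def Ldiff)
  qed
  have "inj F"
  proof (rule injI)
    fix x y assume e: "F x = F y"
    hence "L (x ^ q - x) = L (y ^ q - y)" using psiF by metis
    hence "x ^ q - x = y ^ q - y" by (rule Linj)
    hence "L x = L y" using e unfolding F_def by simp
    thus "x = y" by (rule Linj)
  qed
  hence part2: "bij F" unfolding bij_def using finite_UNIV_inj_surj[OF finite_UNIV \<open>inj F\<close>] by simp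
  show ?thesis using part1 part2 unfolding F_def L_def S_def q_def by simp
qed

end
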